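(* Let $(\Omega,\mathcal{F},\mathbb{P})$ be a nonatomic probability space, let $\delta:[0,1]\to[0,1]$ be concave and increasing with $\delta(0)=0$, $\delta(1)=1$, and let $\mathcal{A}_\delta=\{X\in L^\infty:\rho_\delta(X)\le0\}$. Let $S=(S_0,S_T)$ be a traded asset with $S_T\in L^\infty$. Then $\rho_{\mathcal{A}_\delta,S}$ is finite-valued (hence continuous) on $L^\infty$ if and only if $\delta(F_{S_T}(x))<1$ for some $x>0$. In particular, if $\delta$ is strictly increasing on some left neighborhood of $1$, then $\rho_{\mathcal{A}_\delta,S}$ is finite-valued on $L^\infty$.
   Context: $F_X$ is the distribution function of $X$. The distortion risk measure is $\rho_\delta(X)=\int_{-\infty}^0\delta(F_X(x))\,dx-\int_0^\infty(1-\delta(F_X(x)))\,dx$ for $X\in L^\infty$. A traded asset is $S=(S_0,S_T)$ with $S_0>0$, $S_T\ge0$ a.s., $S_T\ne0$. For $\mathcal{B}\subset L^\infty$, $\rho_{\mathcal{B},S}(X)=\inf\{m\in\mathbb{R}:X+\frac{m}{S_0}S_T\in\mathcal{B}\}$. *)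

theory Defs
  imports "HOL-Probability.Probability"
begin

definition nonatomic :: "'a measure \<Rightarrow> bool" where
  "nonatomic M \<longleftrightarrow> (\<forall>A\<in>sets M. 0 < measure M A \<longrightarrow>
     (\<exists>B\<in>sets M. B \<subseteq> A \<and> 0 < measure M B \<and> measure M B < measure M A))"

definition Linf :: "'a measure \<Rightarrow> ('a \<Rightarrow> real) set" where
  "Linf M = {X. X \<in> borel_measurable M \<and> (\<exists>C. AE \<omega> in M. \<bar>X \<omega>\<bar> \<le> C)}"

definition distr_fun :: "'a measure \<Rightarrow> ('a \<Rightarrow> real) \<Rightarrow> real \<Rightarrow> real" where
  "distr_fun M X x = measure M {\<omega> \<in> space M. X \<omega> \<le> x}"

definition rho_dist :: "'a measure \<Rightarrow> (real \<Rightarrow> real) \<Rightarrow> ('a \<Rightarrow> real) \<Rightarrow> real" where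
  "rho_dist M \<delta> X =
     (LINT x:{..0}|lborel. \<delta> (distr_fun M X x))
     - (LINT x:{0..}|lborel. 1 - \<delta> (distr_fun M X x))"

definition acc_dist :: "'a measure \<Rightarrow> (real \<Rightarrow> real) \<Rightarrow> ('a \<Rightarrow> real) set" where
  "acc_dist M \<delta> = {X \<in> Linf M. rho_dist M \<delta> X \<le> 0}"

text \<open>Risk measure rho_{B,S}, extended-real valued (Inf of the empty set is +infinity).\<close>
definition rho_BS :: "('a \<Rightarrow> real) set \<Rightarrow> real \<Rightarrow> ('a \<Rightarrow> real) \<Rightarrow> ('a \<Rightarrow> real) \<Rightarrow> ereal" where
  "rho_BS B S0 ST X = Inf (ereal ` {m. (\<lambda>\<omega>. X \<omega> + m / S0 * ST \<omega>) \<in> B})"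

definition finite_valued_on_Linf :: "'a measure \<Rightarrow> (('a \<Rightarrow> real) \<Rightarrow> ereal) \<Rightarrow> bool" where
  "finite_valued_on_Linf M \<rho> \<longleftrightarrow> (\<forall>X\<in>Linf M. \<bar>\<rho> X\<bar> \<noteq> \<infinity>)"

end

theory Submission imports Defs begin

lemma F_sets: "(Y::_\<Rightarrow>real) \<in> borel_measurable M \<Longrightarrow> {\<omega> \<in> space M. Y \<omega> \<le> x} \<in> sets M"
  by (simp add: borel_measurable_iff_le)

lemma F_range: "prob_space M \<Longrightarrow> distr_fun M Y x \<in> {0..1}"
  unfolding distr_fun_def using prob_space.prob_le_1 by auto

lemma F_mono:
  assumes "prob_space M" "Y \<in> borel_measurable M" "x \<le> y"
  shows "distr_fun M Y x \<le> distr_fun M Y y"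
proof -
  interpret prob_space M by fact
  show ?thesis unfolding distr_fun_def
    by (rule finite_measure_mono) (use assms F_sets in auto)
qed

lemma F_zero:
  assumes "prob_space M" "Y \<in> borel_measurable M" "AE \<omega> in M. a \<le> Y \<omega>" "x < a"
  shows "distr_fun M Y x = 0"
proof -
  interpret prob_space M by fact
  have "AE \<omega> in M. \<not> Y \<omega> \<le> x" using assms(3) by eventually_elim (use assms(4) in auto)
  thus ?thesis unfolding distr_fun_def
    using prob_Collect_eq_0[OF F_sets[OF assms(2)]] by simp
qed

lemma F_one:
  assumes "prob_space M" "Y \<in> borel_measurable M" "AE \<omega> in M. Y \<omega> \<le> b" "b \<le> x"
  shows "distr_fun M Y x = 1"
proof -
  interpret prob_space M by fact
  have "AE \<omega> in M. Y \<omega> \<le> x" using assms(3) by eventually_elim (use assms(4) in auto)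
  thus ?thesis unfolding distr_fun_def
    using prob_Collect_eq_1[OF F_sets[OF assms(2)]] by simp
qed

lemma integrable_ind0: "integrable lborel (indicator {a..b::real} :: real \<Rightarrow> real)"
  by (rule integrable_real_indicator) (auto simp: emeasure_lborel_Icc_eq)

lemma int_ind: "(a::real) \<le> b \<Longrightarrow> integral\<^sup>L lborel (\<lambda>x. c * indicator {a..b} x) = c*(b-a)"
  by (simp add: measure_lborel_Icc)

lemma integrable_ind: "integrable lborel (\<lambda>x. c * indicator {a..b::real} x :: real)"
  using integrable_ind0 by simp


lemma hF_range:
  fixes \<delta> :: "real \<Rightarrow> real" and Y :: "'a \<Rightarrow> real"
  assumes "prob_space M" "\<delta> ` {0..1} \<subseteq> {0..1}"
  shows "0 \<le> \<delta> (distr_fun M Y x)" "\<delta> (distr_fun M Y x) \<le> 1"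
  using subsetD[OF assms(2) imageI[OF F_range[OF assms(1), of Y x]]] by auto

lemma hF_mono:
  fixes \<delta> :: "real \<Rightarrow> real" and Y :: "'a \<Rightarrow> real"
  assumes "prob_space M" "Y \<in> borel_measurable M" "mono_on {0..1} \<delta>"
  shows "mono (\<lambda>x. \<delta> (distr_fun M Y x))"
proof (rule monoI)
  fix x y :: real assume "x \<le> y"
  thus "\<delta> (distr_fun M Y x) \<le> \<delta> (distr_fun M Y y)"
    using F_mono[OF assms(1,2)] F_range[OF assms(1)] assms(3)
    by (meson mono_onD)
qed

lemma hF_meas:
  fixes \<delta> :: "real \<Rightarrow> real" and Y :: "'a \<Rightarrow> real"
  assumes "prob_space M" "Y \<in> borel_measurable M" "mono_on {0..1} \<delta>"
  shows "(\<lambda>x. \<delta> (distr_fun M Y x)) \<in> borel_measurable lborel"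
  using borel_measurable_mono[OF hF_mono[OF assms]] by simp

lemma integ:
  fixes \<delta> :: "real \<Rightarrow> real" and Y :: "'a \<Rightarrow> real"
  assumes P: "prob_space M" and Y: "Y \<in> borel_measurable M" and K: "AE \<omega> in M. \<bar>Y \<omega>\<bar> \<le> K"
    and m: "mono_on {0..1} \<delta>" and r: "\<delta> ` {0..1} \<subseteq> {0..1}" and d0: "\<delta> 0 = 0" and d1: "\<delta> 1 = 1"
  shows "integrable lborel (\<lambda>x. indicator {..0} x * \<delta> (distr_fun M Y x))"
    and "integrable lborel (\<lambda>x. indicator {0..} x * (1 - \<delta> (distr_fun M Y x)))"
proof -
  have lo: "AE \<omega> in M. -\<bar>K\<bar> \<le> Y \<omega>" using K by eventually_elim auto
  have hi: "AE \<omega> in M. Y \<omega> \<le> \<bar>K\<bar>" using K by eventually_elim auto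
  note hr = hF_range[OF P r, of Y]
  show "integrable lborel (\<lambda>x. indicator {..0} x * \<delta> (distr_fun M Y x))"
  proof (rule Bochner_Integration.integrable_bound[OF integrable_ind0[of "-\<bar>K\<bar>" 0]])
    show "(\<lambda>x. indicator {..0} x * \<delta> (distr_fun M Y x)) \<in> borel_measurable lborel"
      using hF_meas[OF P Y m] by measurable
    show "AE x in lborel. norm (indicator {..0} x * \<delta> (distr_fun M Y x)) \<le> norm (indicator {-\<bar>K\<bar>..0} x :: real)"
    proof (rule AE_I2)
      fix x :: real
      show "norm (indicator {..0} x * \<delta> (distr_fun M Y x)) \<le> norm (indicator {-\<bar>K\<bar>..0} x :: real)"
      proof (cases "x < -\<bar>K\<bar>")
        case True thus ?thesis using F_zero[OF P Y lo True] d0 by simp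
      next
        case False thus ?thesis using hr[of x] by (auto simp: indicator_def)
      qed
    qed
  qed
  show "integrable lborel (\<lambda>x. indicator {0..} x * (1 - \<delta> (distr_fun M Y x)))"
  proof (rule Bochner_Integration.integrable_bound[OF integrable_ind0[of 0 "\<bar>K\<bar>"]])
    show "(\<lambda>x. indicator {0..} x * (1 - \<delta> (distr_fun M Y x))) \<in> borel_measurable lborel"
      using hF_meas[OF P Y m] by measurable
    show "AE x in lborel. norm (indicator {0..} x * (1 - \<delta> (distr_fun M Y x))) \<le> norm (indicator {0..\<bar>K\<bar>} x :: real)"
    proof (rule AE_I2)
      fix x :: real
      show "norm (indicator {0..} x * (1 - \<delta> (distr_fun M Y x))) \<le> norm (indicator {0..\<bar>K\<bar>} x :: real)"
      proof (cases "\<bar>K\<bar> \<le> x")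
        case True thus ?thesis using F_one[OF P Y hi True] d1 by simp
      next
        case False thus ?thesis using hr[of x] by (auto simp: indicator_def)
      qed
    qed
  qed
qed


lemma rho_eq:
  "rho_dist M \<delta> Y = integral\<^sup>L lborel (\<lambda>x. indicator {..0} x * \<delta> (distr_fun M Y x))
     - integral\<^sup>L lborel (\<lambda>x. indicator {0..} x * (1 - \<delta> (distr_fun M Y x)))"
  unfolding rho_dist_def set_lebesgue_integral_def by simp

lemma rho_ge:
  fixes \<delta> :: "real \<Rightarrow> real" and Y :: "'a \<Rightarrow> real"
  assumes P: "prob_space M" and Y: "Y \<in> borel_measurable M" and K: "AE \<omega> in M. \<bar>Y \<omega>\<bar> \<le> K"
    and m: "mono_on {0..1} \<delta>" and r: "\<delta> ` {0..1} \<subseteq> {0..1}" and d0: "\<delta> 0 = 0" and d1: "\<delta> 1 = 1"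
    and a: "a \<le> 0" and ca: "\<And>t. a \<le> t \<Longrightarrow> t \<le> 0 \<Longrightarrow> c \<le> \<delta> (distr_fun M Y t)"
    and b: "0 \<le> b" and cb: "\<And>t. b < t \<Longrightarrow> \<delta> (distr_fun M Y t) = 1"
  shows "-a*c - b \<le> rho_dist M \<delta> Y"
proof -
  note I = integ[OF P Y K m r d0 d1]
  note hr = hF_range[OF P r, of Y]
  have 1: "c * (0 - a) \<le> integral\<^sup>L lborel (\<lambda>x. indicator {..0} x * \<delta> (distr_fun M Y x))"
    unfolding int_ind[OF a, symmetric]
  proof (rule integral_mono[OF integrable_ind I(1)])
    fix x :: real
    show "c * indicator {a..0} x \<le> indicator {..0} x * \<delta> (distr_fun M Y x)"
      using ca[of x] hr[of x] by (auto simp: indicator_def)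
  qed
  have 2: "integral\<^sup>L lborel (\<lambda>x. indicator {0..} x * (1 - \<delta> (distr_fun M Y x))) \<le> 1 * (b - 0)"
    unfolding int_ind[OF b, symmetric]
  proof (rule integral_mono[OF I(2) integrable_ind])
    fix x :: real
    show "indicator {0..} x * (1 - \<delta> (distr_fun M Y x)) \<le> 1 * indicator {0..b} x"
      using cb[of x] hr[of x] by (auto simp: indicator_def)
  qed
  show ?thesis using 1 2 unfolding rho_eq by (simp add: mult.commute)
qed

lemma rho_le:
  fixes \<delta> :: "real \<Rightarrow> real" and Y :: "'a \<Rightarrow> real"
  assumes P: "prob_space M" and Y: "Y \<in> borel_measurable M" and K: "AE \<omega> in M. \<bar>Y \<omega>\<bar> \<le> K"
    and m: "mono_on {0..1} \<delta>" and r: "\<delta> ` {0..1} \<subseteq> {0..1}" and d0: "\<delta> 0 = 0" and d1: "\<delta> 1 = 1"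
    and a: "a \<le> 0" and ca: "\<And>t. t < a \<Longrightarrow> \<delta> (distr_fun M Y t) = 0"
    and b: "0 \<le> b" and cb: "\<And>t. 0 \<le> t \<Longrightarrow> t \<le> b \<Longrightarrow> \<delta> (distr_fun M Y t) \<le> d"
  shows "rho_dist M \<delta> Y \<le> -a - b * (1 - d)"
proof -
  note I = integ[OF P Y K m r d0 d1]
  note hr = hF_range[OF P r, of Y]
  have 1: "integral\<^sup>L lborel (\<lambda>x. indicator {..0} x * \<delta> (distr_fun M Y x)) \<le> 1 * (0 - a)"
    unfolding int_ind[OF a, symmetric]
  proof (rule integral_mono[OF I(1) integrable_ind])
    fix x :: real
    show "indicator {..0} x * \<delta> (distr_fun M Y x) \<le> 1 * indicator {a..0} x"
      using ca[of x] hr[of x] by (auto simp: indicator_def)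
  qed
  have 2: "(1 - d) * (b - 0) \<le> integral\<^sup>L lborel (\<lambda>x. indicator {0..} x * (1 - \<delta> (distr_fun M Y x)))"
    unfolding int_ind[OF b, symmetric]
  proof (rule integral_mono[OF integrable_ind I(2)])
    fix x :: real
    show "(1 - d) * indicator {0..b} x \<le> indicator {0..} x * (1 - \<delta> (distr_fun M Y x))"
      using cb[of x] hr[of x] by (auto simp: indicator_def)
  qed
  show ?thesis using 1 2 unfolding rho_eq by (simp add: algebra_simps)
qed


lemma concave_ge:
  fixes \<delta> :: "real \<Rightarrow> real"
  assumes "concave_on {0..1} \<delta>" "\<delta> 0 = 0" "\<delta> 1 = 1" "0 \<le> p" "p \<le> 1"
  shows "p \<le> \<delta> p"
  using concave_onD[OF assms(1), of p 0 1] assms(2-5) by simp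

lemma exists_F_lt1:
  fixes ST :: "'a \<Rightarrow> real"
  assumes P: "prob_space M" and S: "ST \<in> borel_measurable M"
    and pos: "AE \<omega> in M. ST \<omega> \<ge> 0" and nz: "\<not> (AE \<omega> in M. ST \<omega> = 0)"
  shows "\<exists>x>0. distr_fun M ST x < 1"
proof (rule ccontr)
  interpret prob_space M by fact
  assume "\<not> ?thesis"
  hence "\<forall>n::nat. distr_fun M ST (1 / Suc n) = 1"
    using F_range[OF P, of ST] by (metis atLeastAtMost_iff of_nat_0_less_iff zero_less_Suc
        divide_pos_pos zero_less_one not_less order_antisym)
  hence "\<forall>n::nat. AE \<omega> in M. ST \<omega> \<le> 1 / Suc n"
    unfolding distr_fun_def using prob_Collect_eq_1[OF F_sets[OF S]] by auto
  hence "AE \<omega> in M. \<forall>n::nat. ST \<omega> \<le> 1 / Suc n"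
    by (simp add: AE_all_countable)
  hence "AE \<omega> in M. ST \<omega> = 0" using pos
  proof eventually_elim
    case (elim \<omega>)
    show ?case
    proof (rule ccontr)
      assume "ST \<omega> \<noteq> 0"
      hence "ST \<omega> > 0" using elim by auto
      then obtain n where "inverse (real (Suc n)) < ST \<omega>" using reals_Archimedean by blast
      thus False using elim(1) by (auto simp: field_simps) (metis divide_inverse mult_1 not_less)
    qed
  qed
  thus False using nz by simp
qed


lemma ereal_bound:
  fixes S :: "real set"
  assumes "x \<in> S" "\<And>m. m \<in> S \<Longrightarrow> L \<le> m"
  shows "\<bar>Inf (ereal ` S)\<bar> \<noteq> \<infinity>"
proof -
  have 1: "Inf (ereal ` S) \<le> ereal x" using assms(1) by (simp add: INF_lower)
  have 2: "ereal L \<le> Inf (ereal ` S)" using assms(2) by (simp add: INF_greatest)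
  show ?thesis using 1 2 by (cases "Inf (ereal ` S)") auto
qed

lemma Linf_lin:
  assumes "X \<in> Linf M" "ST \<in> Linf M"
  shows "(\<lambda>\<omega>. X \<omega> + l * ST \<omega>) \<in> Linf M"
proof -
  obtain C where C: "AE \<omega> in M. \<bar>X \<omega>\<bar> \<le> C" and Xm: "X \<in> borel_measurable M"
    using assms(1) unfolding Linf_def by auto
  obtain K where K: "AE \<omega> in M. \<bar>ST \<omega>\<bar> \<le> K" and Sm: "ST \<in> borel_measurable M"
    using assms(2) unfolding Linf_def by auto
  have "AE \<omega> in M. \<bar>X \<omega> + l * ST \<omega>\<bar> \<le> C + \<bar>l\<bar> * K" using C K
  proof eventually_elim
    case (elim \<omega>)
    have "\<bar>l * ST \<omega>\<bar> \<le> \<bar>l\<bar> * K" unfolding abs_mult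
      using elim(2) by (simp add: mult_left_mono)
    thus ?case using elim(1) abs_triangle_ineq[of "X \<omega>" "l * ST \<omega>"] by linarith
  qed
  thus ?thesis using Xm Sm unfolding Linf_def by auto
qed


lemma fwd:
  fixes M :: "'a measure" and \<delta> :: "real \<Rightarrow> real" and S0 :: real and ST :: "'a \<Rightarrow> real"
  assumes P: "prob_space M" and cc: "concave_on {0..1} \<delta>" and mo: "mono_on {0..1} \<delta>"
    and r: "\<delta> ` {0..1} \<subseteq> {0..1}" and d0: "\<delta> 0 = 0" and d1: "\<delta> 1 = 1"
    and S0: "S0 > 0" and STL: "ST \<in> Linf M" and pos: "AE \<omega> in M. ST \<omega> \<ge> 0"
    and x0: "x0 > 0" and dlt: "\<delta> (distr_fun M ST x0) < 1"
  shows "finite_valued_on_Linf M (rho_BS (acc_dist M \<delta>) S0 ST)"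
  unfolding finite_valued_on_Linf_def
proof
  interpret prob_space M by fact
  fix X assume XL: "X \<in> Linf M"
  obtain C0 where C0: "AE \<omega> in M. \<bar>X \<omega>\<bar> \<le> C0" and Xm: "X \<in> borel_measurable M"
    using XL unfolding Linf_def by auto
  define C where "C = \<bar>C0\<bar>"
  have C: "AE \<omega> in M. \<bar>X \<omega>\<bar> \<le> C" using C0 by eventually_elim (auto simp: C_def)
  have Cnn: "C \<ge> 0" by (simp add: C_def)
  have Sm: "ST \<in> borel_measurable M" using STL unfolding Linf_def by auto
  define Yf where "Yf l = (\<lambda>\<omega>. X \<omega> + l * ST \<omega>)" for l
  have YL: "Yf l \<in> Linf M" for l unfolding Yf_def by (rule Linf_lin[OF XL STL])
  have Ym: "Yf l \<in> borel_measurable M" for l using YL[of l] unfolding Linf_def by auto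
  have "\<forall>l. \<exists>K. AE \<omega> in M. \<bar>Yf l \<omega>\<bar> \<le> K" using YL unfolding Linf_def by blast
  then obtain KY where KYa: "\<forall>l. AE \<omega> in M. \<bar>Yf l \<omega>\<bar> \<le> KY l" by (rule choice[THEN exE])
  have KY: "AE \<omega> in M. \<bar>Yf l \<omega>\<bar> \<le> KY l" for l using KYa by blast
  define S where "S = {m. (\<lambda>\<omega>. X \<omega> + m / S0 * ST \<omega>) \<in> acc_dist M \<delta>}"
  have S_iff: "m \<in> S \<longleftrightarrow> rho_dist M \<delta> (Yf (m / S0)) \<le> 0" for m
  proof -
    have "(\<lambda>\<omega>. X \<omega> + m / S0 * ST \<omega>) = Yf (m / S0)" by (simp add: Yf_def)
    thus ?thesis unfolding S_def acc_dist_def using YL[of "m / S0"] by simp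
  qed
  define F where "F = distr_fun M ST x0"
  have F01: "F \<in> {0..1}" unfolding F_def by (rule F_range[OF P])
  have Flt: "F < 1" using dlt d1 F01 unfolding F_def by (cases "distr_fun M ST x0 = 1") auto
  define p where "p = 1 - F"
  have p: "0 < p" "p \<le> 1" using F01 Flt by (auto simp: p_def)
  have p_eq: "p = measure M {\<omega> \<in> space M. x0 < ST \<omega>}"
  proof -
    have "{\<omega> \<in> space M. x0 < ST \<omega>} = space M - {\<omega> \<in> space M. ST \<omega> \<le> x0}" by auto
    thus ?thesis using prob_compl[OF F_sets[OF Sm, of x0]] by (simp add: p_def F_def distr_fun_def)
  qed
  define dp where "dp = \<delta> p"
  have dp: "dp > 0" using concave_ge[OF cc d0 d1, of p] p by (simp add: dp_def)
  define L where "L = -(C + C/dp + 1)/x0"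
  have lower: "L * S0 \<le> m" if mS: "m \<in> S" for m
  proof (rule ccontr)
    assume "\<not> L * S0 \<le> m"
    define l where "l = m / S0"
    have lL: "l < L" using \<open>\<not> L * S0 \<le> m\<close> S0 by (simp add: l_def pos_divide_less_eq)
    have lx: "l * x0 < -(C + C/dp + 1)" using mult_strict_right_mono[OF lL x0] x0
      by (simp add: L_def)
    have Cdp: "C/dp \<ge> 0" using Cnn dp by simp
    have "l * x0 < 0" using lx Cdp Cnn by linarith
    hence lneg: "l < 0" using x0 by (simp add: mult_less_0_iff)
    define a where "a = C + l * x0"
    have a: "a \<le> 0" using lx Cdp unfolding a_def by linarith
    have "-a*dp - C \<le> rho_dist M \<delta> (Yf l)"
    proof (rule rho_ge[OF P Ym KY mo r d0 d1 a _ Cnn])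
      fix t assume t: "a \<le> t" "t \<le> 0"
      have "p \<le> distr_fun M (Yf l) t" unfolding p_eq distr_fun_def
      proof (rule finite_measure_mono_AE[OF _ F_sets[OF Ym]])
        show "AE \<omega> in M. \<omega> \<in> {\<omega> \<in> space M. x0 < ST \<omega>} \<longrightarrow> \<omega> \<in> {\<omega> \<in> space M. Yf l \<omega> \<le> t}"
          using C
        proof eventually_elim
          case (elim \<omega>)
          { assume "\<omega> \<in> space M" "x0 < ST \<omega>"
            hence "l * ST \<omega> \<le> l * x0" using lneg by (simp add: mult_left_mono_neg)
            moreover have "X \<omega> \<le> C" using elim by (simp add: abs_le_iff)
            ultimately have "Yf l \<omega> \<le> t" using t unfolding Yf_def a_def by linarith }
          thus ?case by auto
        qed
      qed
      moreover have "distr_fun M (Yf l) t \<in> {0..1}" by (rule F_range[OF P])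
      ultimately show "dp \<le> \<delta> (distr_fun M (Yf l) t)" unfolding dp_def
        using p by (intro mono_onD[OF mo]) auto
    next
      fix t assume t: "C < t"
      have "AE \<omega> in M. Yf l \<omega> \<le> C" using C pos
      proof eventually_elim
        case (elim \<omega>)
        have "l * ST \<omega> \<le> 0" using lneg elim(2) by (simp add: mult_nonpos_nonneg)
        moreover have "X \<omega> \<le> C" using elim by (simp add: abs_le_iff)
        ultimately show ?case unfolding Yf_def by linarith
      qed
      thus "\<delta> (distr_fun M (Yf l) t) = 1" using F_one[OF P Ym _ ] t d1 by auto
    qed
    moreover have "(C/dp + 1) * dp \<le> -a * dp"
      using lx dp by (intro mult_right_mono) (auto simp: a_def)
    moreover have "(C/dp + 1) * dp = C + dp" using dp by (simp add: field_simps)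
    ultimately have "0 < rho_dist M \<delta> (Yf l)" using dp by linarith
    thus False using mS S_iff l_def by auto
  qed
  define d where "d = \<delta> F"
  have d: "d < 1" using dlt by (simp add: d_def F_def)
  define b where "b = C / (1 - d) + 1"
  have b: "b \<ge> 0" using d Cnn by (simp add: b_def)
  define l where "l = (b + C + 1) / x0"
  have l: "l > 0" using b Cnn x0 unfolding l_def by simp
  have lx: "l * x0 = b + C + 1" using x0 by (simp add: l_def)
  have "rho_dist M \<delta> (Yf l) \<le> - (- C) - b * (1 - d)"
  proof (rule rho_le[OF P Ym KY mo r d0 d1 _ _ b])
    show "- C \<le> 0" using Cnn by simp
  next
    fix t assume t: "t < - C"
    have "AE \<omega> in M. - C \<le> Yf l \<omega>" using C pos
    proof eventually_elim
      case (elim \<omega>)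
      have "0 \<le> l * ST \<omega>" using l elim(2) by simp
      moreover have "- C \<le> X \<omega>" using elim by (simp add: abs_le_iff)
      ultimately show ?case unfolding Yf_def by linarith
    qed
    thus "\<delta> (distr_fun M (Yf l) t) = 0" using F_zero[OF P Ym _ t] d0 by auto
  next
    fix t assume t: "0 \<le> t" "t \<le> b"
    have "distr_fun M (Yf l) t \<le> F" unfolding F_def distr_fun_def
    proof (rule finite_measure_mono_AE[OF _ F_sets[OF Sm]])
      show "AE \<omega> in M. \<omega> \<in> {\<omega> \<in> space M. Yf l \<omega> \<le> t} \<longrightarrow> \<omega> \<in> {\<omega> \<in> space M. ST \<omega> \<le> x0}"
        using C
      proof eventually_elim
        case (elim \<omega>)
        { assume "\<omega> \<in> space M" "Yf l \<omega> \<le> t" "\<not> ST \<omega> \<le> x0"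
          hence "l * x0 < l * ST \<omega>" using l by simp
          moreover have "- C \<le> X \<omega>" using elim by (simp add: abs_le_iff)
          ultimately have False using t lx \<open>Yf l \<omega> \<le> t\<close> unfolding Yf_def by linarith }
        thus ?case by auto
      qed
    qed
    moreover have "distr_fun M (Yf l) t \<in> {0..1}" by (rule F_range[OF P])
    ultimately show "\<delta> (distr_fun M (Yf l) t) \<le> d" unfolding d_def
      using F01 by (intro mono_onD[OF mo]) auto
  qed
  moreover have "b * (1 - d) = C + (1 - d)" using d by (simp add: b_def field_simps)
  ultimately have "rho_dist M \<delta> (Yf l) \<le> 0" using d by linarith
  hence mS0: "l * S0 \<in> S" using S_iff[of "l * S0"] S0 by simp
  show "\<bar>rho_BS (acc_dist M \<delta>) S0 ST X\<bar> \<noteq> \<infinity>"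
    unfolding rho_BS_def S_def[symmetric] by (rule ereal_bound[OF mS0 lower])
qed


lemma bwd:
  fixes M :: "'a measure" and \<delta> :: "real \<Rightarrow> real" and S0 :: real and ST :: "'a \<Rightarrow> real"
  assumes P: "prob_space M" and mo: "mono_on {0..1} \<delta>"
    and r: "\<delta> ` {0..1} \<subseteq> {0..1}" and d0: "\<delta> 0 = 0" and d1: "\<delta> 1 = 1"
    and S0: "S0 > 0" and STL: "ST \<in> Linf M" and pos: "AE \<omega> in M. ST \<omega> \<ge> 0"
    and fv: "finite_valued_on_Linf M (rho_BS (acc_dist M \<delta>) S0 ST)"
  shows "\<exists>x>0. \<delta> (distr_fun M ST x) < 1"
proof (rule ccontr)
  assume H: "\<not> ?thesis"
  define X where "X = (\<lambda>\<omega>::'a. - 1 :: real)"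
  have XL: "X \<in> Linf M" unfolding Linf_def X_def by (auto intro!: exI[of _ 1])
  have Sm: "ST \<in> borel_measurable M" using STL unfolding Linf_def by auto
  define S where "S = {m. (\<lambda>\<omega>. X \<omega> + m / S0 * ST \<omega>) \<in> acc_dist M \<delta>}"
  have "S = {}"
  proof (rule ccontr)
    assume "S \<noteq> {}"
    then obtain m where m: "m \<in> S" by auto
    define l where "l = m / S0"
    define Y where "Y = (\<lambda>\<omega>. X \<omega> + l * ST \<omega>)"
    have YL: "Y \<in> Linf M" unfolding Y_def by (rule Linf_lin[OF XL STL])
    then obtain K where K: "AE \<omega> in M. \<bar>Y \<omega>\<bar> \<le> K" and Ym: "Y \<in> borel_measurable M"
      unfolding Linf_def by auto
    have rle: "rho_dist M \<delta> Y \<le> 0" using m unfolding S_def acc_dist_def Y_def l_def by simp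
    have one: "\<delta> (distr_fun M Y t) = 1" if t: "-1 < t" for t
    proof (cases "l \<le> 0")
      case True
      have "AE \<omega> in M. Y \<omega> \<le> -1" using pos
      proof eventually_elim
        case (elim \<omega>)
        have "l * ST \<omega> \<le> 0" using True elim by (simp add: mult_nonpos_nonneg)
        thus ?case unfolding Y_def X_def by linarith
      qed
      thus ?thesis using F_one[OF P Ym _ less_imp_le[OF t]] d1 by simp
    next
      case False
      hence l: "l > 0" by simp
      have "{\<omega> \<in> space M. Y \<omega> \<le> t} = {\<omega> \<in> space M. ST \<omega> \<le> (t + 1) / l}"
        using l by (auto simp: Y_def X_def pos_le_divide_eq algebra_simps)
      hence eq: "distr_fun M Y t = distr_fun M ST ((t + 1) / l)" unfolding distr_fun_def by simp
      have "(t + 1) / l > 0" using l t by simp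
      hence "\<delta> (distr_fun M ST ((t + 1) / l)) \<ge> 1" using H by auto
      moreover have "\<delta> (distr_fun M ST ((t + 1) / l)) \<le> 1" by (rule hF_range[OF P r])
      ultimately show ?thesis using eq by simp
    qed
    have "-(-1/2)*1 - 0 \<le> rho_dist M \<delta> Y"
      by (rule rho_ge[OF P Ym K mo r d0 d1]) (use one in auto)
    thus False using rle by simp
  qed
  hence "rho_BS (acc_dist M \<delta>) S0 ST X = \<infinity>"
    unfolding rho_BS_def S_def[symmetric] by (simp add: top_ereal_def)
  thus False using fv XL unfolding finite_valued_on_Linf_def by force
qed

theorem proposition8p1:
  fixes M :: "'a measure" and \<delta> :: "real \<Rightarrow> real" and S0 :: real and ST :: "'a \<Rightarrow> real"
  assumes "prob_space M" and "nonatomic M"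
    and "concave_on {0..1} \<delta>" and "mono_on {0..1} \<delta>"
    and "\<delta> ` {0..1} \<subseteq> {0..1}" and "\<delta> 0 = 0" and "\<delta> 1 = 1"
    and "S0 > 0" and "ST \<in> Linf M" and "AE \<omega> in M. ST \<omega> \<ge> 0"
    and "\<not> (AE \<omega> in M. ST \<omega> = 0)"
  shows "(finite_valued_on_Linf M (rho_BS (acc_dist M \<delta>) S0 ST)
            \<longleftrightarrow> (\<exists>x>0. \<delta> (distr_fun M ST x) < 1))
         \<and> ((\<exists>\<epsilon>>0. strict_mono_on {1 - \<epsilon>..1} \<delta>)
            \<longrightarrow> finite_valued_on_Linf M (rho_BS (acc_dist M \<delta>) S0 ST))"
proof -
  note P = assms(1) and cc = assms(3) and mo = assms(4) and r = assms(5) and d0 = assms(6)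
    and d1 = assms(7) and S0 = assms(8) and STL = assms(9) and pos = assms(10) and nz = assms(11)
  have Sm: "ST \<in> borel_measurable M" using STL unfolding Linf_def by auto
  have iff: "finite_valued_on_Linf M (rho_BS (acc_dist M \<delta>) S0 ST)
            \<longleftrightarrow> (\<exists>x>0. \<delta> (distr_fun M ST x) < 1)"
  proof
    assume "finite_valued_on_Linf M (rho_BS (acc_dist M \<delta>) S0 ST)"
    thus "\<exists>x>0. \<delta> (distr_fun M ST x) < 1" by (rule bwd[OF P mo r d0 d1 S0 STL pos])
  next
    assume "\<exists>x>0. \<delta> (distr_fun M ST x) < 1"
    then obtain x where "x > 0" "\<delta> (distr_fun M ST x) < 1" by auto
    thus "finite_valued_on_Linf M (rho_BS (acc_dist M \<delta>) S0 ST)"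
      by (intro fwd[OF P cc mo r d0 d1 S0 STL pos])
  qed
  moreover have "(\<exists>\<epsilon>>0. strict_mono_on {1 - \<epsilon>..1} \<delta>)
            \<longrightarrow> finite_valued_on_Linf M (rho_BS (acc_dist M \<delta>) S0 ST)"
  proof
    assume "\<exists>\<epsilon>>0. strict_mono_on {1 - \<epsilon>..1} \<delta>"
    then obtain e where e: "e > 0" "strict_mono_on {1 - e..1} \<delta>" by auto
    obtain x where x: "x > 0" "distr_fun M ST x < 1" using exists_F_lt1[OF P Sm pos nz] by auto
    define F where "F = distr_fun M ST x"
    have F: "0 \<le> F" "F < 1" using F_range[OF P, of ST x] x by (auto simp: F_def)
    have "\<delta> F < 1"
    proof (cases "1 - e \<le> F")
      case True
      thus ?thesis using strict_mono_onD[OF e(2), of F 1] F d1 by simp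
    next
      case False
      have "\<delta> F \<le> \<delta> (1 - e)" using False F e by (intro mono_onD[OF mo]) auto
      also have "\<delta> (1 - e) < \<delta> 1" using strict_mono_onD[OF e(2), of "1 - e" 1] e by simp
      finally show ?thesis using d1 by simp
    qed
    thus "finite_valued_on_Linf M (rho_BS (acc_dist M \<delta>) S0 ST)" using iff x(1) F_def by blast
  qed
  ultimately show ?thesis by blast
qed

end
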